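(* Let $b$ be a block and $r$ a round. If in round $r$ there are $2f+1$ blocks from distinct validators that are certificates for $b$, then every (valid) block of every round $r'>r$ has a path to some round-$r$ certificate for $b$.
   Context: There are $n=3f+1$ validators, at most $f$ Byzantine. Blocks are organized in rounds; every valid block of round $r$ has as parents (hash references) at least $2f+1$ blocks of round $r-1$ from distinct validators (and possibly earlier blocks). There is a path from $b$ to $b'$ if $b'$ is reached from $b$ by repeatedly following parent references. A block $b$ of round $r'$ is a vote for a block $L$ of round $r<r'$ with author $a$ if the first block with author $a$ and round $r$ encountered in the deterministic depth-first search from $b$ along parent references is $L$. For a fixed wave length $w\ge 4$, a block $c$ of round $r+w-1$ is a certificate for a block $L$ of round $r$ if at least $2f+1$ of $c$'s parents (round $r+w-2$ blocks) are votes for $L$. *)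

theory Defs
  imports Main
begin

fun first_some :: "'a option list \<Rightarrow> 'a option" where
  "first_some [] = None"
| "first_some (Some z # _) = Some z"
| "first_some (None # xs) = first_some xs"

text \<open>Deterministic depth-first search (preorder, parents visited in list order) from a block,
  returning the first encountered block satisfying P. The natural number is a depth bound;
  it is instantiated with the round of the start block, which suffices since parents have
  strictly smaller rounds.\<close>
fun dfs_find :: "('b \<Rightarrow> 'b list) \<Rightarrow> ('b \<Rightarrow> bool) \<Rightarrow> nat \<Rightarrow> 'b \<Rightarrow> 'b option" where
  "dfs_find ps P 0 x = (if P x then Some x else None)"
| "dfs_find ps P (Suc k) x =
     (if P x then Some x else first_some (map (dfs_find ps P k) (ps x)))"

definition edges :: "('b \<Rightarrow> 'b list) \<Rightarrow> ('b \<times> 'b) set" where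
  "edges ps = {(x, y). y \<in> set (ps x)}"

definition is_vote :: "('b \<Rightarrow> 'v) \<Rightarrow> ('b \<Rightarrow> nat) \<Rightarrow> ('b \<Rightarrow> 'b list) \<Rightarrow> 'b \<Rightarrow> 'b \<Rightarrow> bool" where
  "is_vote author rnd ps b L \<longleftrightarrow> rnd L < rnd b \<and>
     dfs_find ps (\<lambda>x. author x = author L \<and> rnd x = rnd L) (rnd b) b = Some L"

definition is_certificate ::
  "nat \<Rightarrow> nat \<Rightarrow> ('b \<Rightarrow> 'v) \<Rightarrow> ('b \<Rightarrow> nat) \<Rightarrow> ('b \<Rightarrow> 'b list) \<Rightarrow> 'b \<Rightarrow> 'b \<Rightarrow> bool" where
  "is_certificate f w author rnd ps c L \<longleftrightarrow> rnd c = rnd L + w - 1 \<and>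
     card {p \<in> set (ps c). rnd p = rnd L + w - 2 \<and> is_vote author rnd ps p L} \<ge> 2 * f + 1"

definition valid_dag ::
  "nat \<Rightarrow> 'v set \<Rightarrow> 'v set \<Rightarrow> ('b \<Rightarrow> 'v) \<Rightarrow> ('b \<Rightarrow> nat) \<Rightarrow> ('b \<Rightarrow> 'b list) \<Rightarrow> 'b set \<Rightarrow> bool" where
  "valid_dag f V Byz author rnd ps B \<longleftrightarrow>
     finite V \<and> card V = 3 * f + 1 \<and> Byz \<subseteq> V \<and> card Byz \<le> f \<and>
     (\<forall>x\<in>B. author x \<in> V) \<and>
     (\<forall>x\<in>B. \<forall>p\<in>set (ps x). p \<in> B \<and> rnd p < rnd x) \<and>
     (\<forall>x\<in>B. 0 < rnd x \<longrightarrow> (\<exists>S \<subseteq> set (ps x). card S \<ge> 2 * f + 1 \<and>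
          (\<forall>p\<in>S. rnd p = rnd x - 1) \<and> inj_on author S)) \<and>
     (\<forall>x\<in>B. \<forall>y\<in>B. author x = author y \<and> author x \<notin> Byz \<and> rnd x = rnd y \<longrightarrow> x = y)"

end

theory Submission
  imports Defs
begin

lemma card_inter_lb:
  assumes "finite V" "A \<subseteq> V" "B \<subseteq> V"
  shows "card A + card B \<le> card V + card (A \<inter> B)"
proof -
  have "card (A \<union> B) + card (A \<inter> B) = card A + card B"
    using assms by (metis card_Un_Int finite_subset)
  moreover have "card (A \<union> B) \<le> card V" using assms by (simp add: card_mono)
  ultimately show ?thesis by linarith
qed

theorem lemma1:
  fixes f w r :: nat and V Byz :: "'v set" and author :: "'b \<Rightarrow> 'v"
    and rnd :: "'b \<Rightarrow> nat" and ps :: "'b \<Rightarrow> 'b list" and B C :: "'b set" and b :: 'b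
  assumes "valid_dag f V Byz author rnd ps B"
    and "w \<ge> 4"
    and "b \<in> B"
    and "C \<subseteq> B" and "card C = 2 * f + 1" and "inj_on author C"
    and "\<forall>c\<in>C. rnd c = r \<and> is_certificate f w author rnd ps c b"
  shows "\<forall>x\<in>B. r < rnd x \<longrightarrow>
           (\<exists>c\<in>B. rnd c = r \<and> is_certificate f w author rnd ps c b \<and> (x, c) \<in> (edges ps)\<^sup>+)"
proof -
  note vd = assms(1)[unfolded valid_dag_def]
  have finV: "finite V" and cV: "card V = 3 * f + 1" and BV: "Byz \<subseteq> V" and cB: "card Byz \<le> f"
    and auth: "\<forall>x\<in>B. author x \<in> V"
    and par: "\<forall>x\<in>B. \<forall>p\<in>set (ps x). p \<in> B \<and> rnd p < rnd x"
    and ex: "\<forall>x\<in>B. 0 < rnd x \<longrightarrow> (\<exists>S \<subseteq> set (ps x). card S \<ge> 2 * f + 1 \<and>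
          (\<forall>p\<in>S. rnd p = rnd x - 1) \<and> inj_on author S)"
    and hon: "\<forall>x\<in>B. \<forall>y\<in>B. author x = author y \<and> author x \<notin> Byz \<and> rnd x = rnd y \<longrightarrow> x = y"
    using vd by auto
  let ?P = "\<lambda>x. \<exists>c\<in>B. rnd c = r \<and> is_certificate f w author rnd ps c b \<and> (x, c) \<in> (edges ps)\<^sup>+"
  have main: "\<forall>x\<in>B. rnd x = r + 1 + k \<longrightarrow> ?P x" for k
  proof (induction k)
    case 0
    show ?case
    proof (intro ballI impI)
      fix x assume xB: "x \<in> B" and rx: "rnd x = r + 1 + 0"
      obtain S where S: "S \<subseteq> set (ps x)" "card S \<ge> 2 * f + 1" "\<forall>p\<in>S. rnd p = rnd x - 1"
        "inj_on author S" using ex xB rx by auto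
      have SB: "S \<subseteq> B" using S(1) par xB by auto
      have finS: "finite S" using S(2) card.infinite by fastforce
      have A1: "author ` S \<subseteq> V" using SB auth by auto
      have A2: "author ` C \<subseteq> V" using assms(4) auth by auto
      have c1: "card (author ` S) \<ge> 2*f+1" using S card_image by metis
      have c2: "card (author ` C) = 2*f+1" using assms(5,6) card_image by metis
      have "card (author ` S \<inter> author ` C) \<ge> f + 1"
        using card_inter_lb[OF finV A1 A2] c1 c2 cV by linarith
      hence "\<not> (author ` S \<inter> author ` C \<subseteq> Byz)"
        using cB card_mono[OF finite_subset[OF BV finV]] by (metis le_trans not_less_eq_eq add.commute plus_1_eq_Suc)
      then obtain a where "a \<in> author ` S" "a \<in> author ` C" "a \<notin> Byz" by blast
      then obtain p c where p: "p \<in> S" "c \<in> C" "author p = author c" "author p \<notin> Byz" by (metis imageE)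
      have "p \<in> B" "c \<in> B" "rnd p = rnd c" using p SB assms(4,7) S(3) rx by auto
      hence "p = c" using hon p by blast
      moreover have "(x, p) \<in> edges ps" using p S(1) unfolding edges_def by auto
      ultimately show "?P x" using p assms(4,7) by blast
    qed
  next
    case (Suc k)
    show ?case
    proof (intro ballI impI)
      fix x assume xB: "x \<in> B" and rx: "rnd x = r + 1 + Suc k"
      obtain S where S: "S \<subseteq> set (ps x)" "card S \<ge> 2 * f + 1" "\<forall>p\<in>S. rnd p = rnd x - 1"
        "inj_on author S" using ex xB rx by auto
      have "S \<noteq> {}" using S(2) by auto
      then obtain p where p: "p \<in> S" by auto
      have pB: "p \<in> B" using p S(1) par xB by auto
      have "rnd p = r + 1 + k" using p S(3) rx by auto
      then obtain c where c: "c\<in>B" "rnd c = r" "is_certificate f w author rnd ps c b" "(p, c) \<in> (edges ps)\<^sup>+"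
        using Suc pB by blast
      have "(x, p) \<in> edges ps" using p S(1) unfolding edges_def by auto
      hence "(x, c) \<in> (edges ps)\<^sup>+" using c(4) by (rule trancl_into_trancl2)
      with c show "?P x" by blast
    qed
  qed
  show ?thesis
  proof (intro ballI impI)
    fix x assume "x \<in> B" "r < rnd x"
    then obtain k where "rnd x = r + 1 + k" by (metis add_Suc_right less_iff_Suc_add plus_1_eq_Suc add.commute)
    then show "?P x" using main \<open>x \<in> B\<close> by blast
  qed
qed

end
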